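(* Let $(A,\varphi,\phi_A,[\cdot,\cdot]_A,a_A,K,\langle\cdot,\cdot\rangle)$ be a para-Kähler hom-Lie algebroid, $\Omega(X,Y)=\langle(\phi_A\circ K)X,Y\rangle$, $\nabla$ the hom-Levi-Civita connection and $\nabla^a$ the connection determined by $\Omega(\nabla^{a}_XY,\phi_A(Z))=a_A(\phi_A(X))\Omega(Y,Z)-\Omega(\phi_A(Y),[X,Z]_A)$ for all $Z\in\Gamma(A)$. Then $\nabla_XY=\nabla^a_XY$ for all $X,Y\in\Gamma(A^1)$, and $\nabla_{\bar X}\bar Y=\nabla^a_{\bar X}\bar Y$ for all $\bar X,\bar Y\in\Gamma(A^{-1})$.
   Context: Standing conventions. $M$ is a smooth manifold, $\varphi:M\to M$ a diffeomorphism, $\varphi^*f=f\circ\varphi$. A hom-bundle $(A\to M,\varphi,\phi_A)$ is a vector bundle $A\to M$ together with an invertible $\mathbb R$-linear map $\phi_A:\Gamma(A)\to\Gamma(A)$ with $\phi_A(fX)=\varphi^*(f)\phi_A(X)$. $\varphi^!TM$ is the pullback bundle; its sections are identified with $\mathbb R$-linear maps $D:C^\infty(M)\to C^\infty(M)$ with $D(fg)=D(f)\varphi^*(g)+\varphi^*(f)D(g)$. A hom-Lie algebroid $(A,\varphi,\phi_A,[\cdot,\cdot]_A,a_A)$ consists of a hom-bundle, a skew-symmetric $\mathbb R$-bilinear bracket on $\Gamma(A)$ with $\phi_A[X,Y]_A=[\phi_A X,\phi_A Y]_A$ and $[\phi_A(X),[Y,Z]_A]_A+[\phi_A(Y),[Z,X]_A]_A+[\phi_A(Z),[X,Y]_A]_A=0$,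 and a bundle map $a_A:A\to\varphi^!TM$ such that $[X,fY]_A=\varphi^*(f)[X,Y]_A+a_A(\phi_A(X))(f)\phi_A(Y)$, $\varphi^*\circ a_A(X)=a_A(\phi_A(X))\circ\varphi^*$, and $a_A([X,Y]_A)\circ\varphi^*=a_A(\phi_AX)\circ a_A(Y)-a_A(\phi_AY)\circ a_A(X)$. Pseudo-Riemannian metric: a symmetric nondegenerate bilinear form $\langle\cdot,\cdot\rangle$ on $A$ with $\langle\phi_AX,\phi_AY\rangle=\varphi^*\langle X,Y\rangle$. The hom-Levi-Civita connection is the unique $\mathbb R$-bilinear $\nabla:\Gamma(A)\times\Gamma(A)\to\Gamma(A)$ with $\nabla_{fX}Y=\varphi^*(f)\nabla_XY$, $\nabla_X(fY)=\varphi^*(f)\nabla_XY+a_A(\phi_AX)(f)\phi_A(Y)$, $[X,Y]_A=\nabla_XY-\nabla_YX$, and $a_A(\phi_AX)\langle Y,Z\rangle=\langle\nabla_XY,\phi_AZ\rangle+\langle\phi_AY,\nabla_XZ\rangle$. An almost para-complex structure is an invertible map $K:\Gamma(A)\to\Gamma(A)$ with $(\phi_A\circ K)^2=\mathrm{Id}$, $\phi_A\circ K=K\circ\phi_A$, and such that $A^1=\ker(\phi_A\circ K-\mathrm{Id})$ and $A^{-1}=\ker(\phi_A\circ K+\mathrm{Id})$ have the same rank (so $A=A^1\oplus A^{-1}$). $(K,\langle\cdot,\cdot\rangle)$ is almost para-Hermitian if $\langle(\phi_A\circ K)X,(\phi_A\circ K)Y\rangle=-\langle X,Y\rangle$. A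 para-Kähler hom-Lie algebroid is an almost para-Hermitian hom-Lie algebroid with $\nabla_X\phi_A(KY)=\phi_A(K(\nabla_XY))$ for all $X,Y$, $\nabla$ the hom-Levi-Civita connection. *)

theory Defs
  imports Main "HOL.Real_Vector_Spaces"
begin

text \<open>The type 'f stands for the commutative real algebra C^infty(M),
  the type 's for the space of sections Gamma(A). The C^infty(M)-module structure on
  sections is given by sm (sm f X = f X). The map pb is the pullback varphi^*.
  Sections of the pullback bundle varphi^! TM are varphi-derivations D :: 'f => 'f.\<close>

definition real_lin_s :: "('f::{comm_ring_1,real_algebra_1} \<Rightarrow> 's::ab_group_add \<Rightarrow> 's)
    \<Rightarrow> ('s \<Rightarrow> 's) \<Rightarrow> bool" where
  "real_lin_s sm T \<longleftrightarrow> (\<forall>X Y. T (X + Y) = T X + T Y)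
     \<and> (\<forall>c X. T (sm (of_real c) X) = sm (of_real c) (T X))"

definition sections_module :: "('f::{comm_ring_1,real_algebra_1} \<Rightarrow> 's::ab_group_add \<Rightarrow> 's) \<Rightarrow> bool" where
  "sections_module sm \<longleftrightarrow>
     (\<forall>f X Y. sm f (X + Y) = sm f X + sm f Y)
   \<and> (\<forall>f g X. sm (f + g) X = sm f X + sm g X)
   \<and> (\<forall>f g X. sm (f * g) X = sm f (sm g X))
   \<and> (\<forall>X. sm 1 X = X)"

definition pullback_map :: "('f::{comm_ring_1,real_algebra_1} \<Rightarrow> 'f) \<Rightarrow> bool" where
  "pullback_map pb \<longleftrightarrow> bij pb
   \<and> (\<forall>f g. pb (f + g) = pb f + pb g)
   \<and> (\<forall>f g. pb (f * g) = pb f * pb g)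
   \<and> pb 1 = 1
   \<and> (\<forall>c f. pb (scaleR c f) = scaleR c (pb f))"

definition phi_derivation :: "('f::{comm_ring_1,real_algebra_1} \<Rightarrow> 'f) \<Rightarrow> ('f \<Rightarrow> 'f) \<Rightarrow> bool" where
  "phi_derivation pb D \<longleftrightarrow>
     (\<forall>f g. D (f + g) = D f + D g)
   \<and> (\<forall>c f. D (scaleR c f) = scaleR c (D f))
   \<and> (\<forall>f g. D (f * g) = D f * pb g + pb f * D g)"

definition hom_bundle :: "('f::{comm_ring_1,real_algebra_1} \<Rightarrow> 's::ab_group_add \<Rightarrow> 's)
    \<Rightarrow> ('f \<Rightarrow> 'f) \<Rightarrow> ('s \<Rightarrow> 's) \<Rightarrow> bool" where
  "hom_bundle sm pb phi \<longleftrightarrow> sections_module sm \<and> pullback_map pb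
   \<and> bij phi \<and> real_lin_s sm phi
   \<and> (\<forall>f X. phi (sm f X) = sm (pb f) (phi X))"

definition hom_lie_algebroid :: "('f::{comm_ring_1,real_algebra_1} \<Rightarrow> 's::ab_group_add \<Rightarrow> 's)
    \<Rightarrow> ('f \<Rightarrow> 'f) \<Rightarrow> ('s \<Rightarrow> 's) \<Rightarrow> ('s \<Rightarrow> 's \<Rightarrow> 's) \<Rightarrow> ('s \<Rightarrow> 'f \<Rightarrow> 'f) \<Rightarrow> bool" where
  "hom_lie_algebroid sm pb phi br anc \<longleftrightarrow> hom_bundle sm pb phi
   \<and> (\<forall>X. real_lin_s sm (br X)) \<and> (\<forall>Y. real_lin_s sm (\<lambda>X. br X Y))
   \<and> (\<forall>X Y. br X Y = - br Y X)
   \<and> (\<forall>X Y. phi (br X Y) = br (phi X) (phi Y))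
   \<and> (\<forall>X Y Z. br (phi X) (br Y Z) + br (phi Y) (br Z X) + br (phi Z) (br X Y) = 0)
   \<and> (\<forall>X. phi_derivation pb (anc X))
   \<and> (\<forall>X Y g. anc (X + Y) g = anc X g + anc Y g)
   \<and> (\<forall>f X g. anc (sm f X) g = f * anc X g)
   \<and> (\<forall>X f Y. br X (sm f Y) = sm (pb f) (br X Y) + sm (anc (phi X) f) (phi Y))
   \<and> (\<forall>X g. pb (anc X g) = anc (phi X) (pb g))
   \<and> (\<forall>X Y g. anc (br X Y) (pb g) = anc (phi X) (anc Y g) - anc (phi Y) (anc X g))"

definition pseudo_riemannian :: "('f::{comm_ring_1,real_algebra_1} \<Rightarrow> 's::ab_group_add \<Rightarrow> 's)
    \<Rightarrow> ('f \<Rightarrow> 'f) \<Rightarrow> ('s \<Rightarrow> 's) \<Rightarrow> ('s \<Rightarrow> 's \<Rightarrow> 'f) \<Rightarrow> bool" where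
  "pseudo_riemannian sm pb phi ip \<longleftrightarrow>
     (\<forall>X Y. ip X Y = ip Y X)
   \<and> (\<forall>X Y Z. ip (X + Y) Z = ip X Z + ip Y Z)
   \<and> (\<forall>f X Y. ip (sm f X) Y = f * ip X Y)
   \<and> (\<forall>X. (\<forall>Y. ip X Y = 0) \<longrightarrow> X = 0)
   \<and> (\<forall>X Y. ip (phi X) (phi Y) = pb (ip X Y))"

definition hom_levi_civita :: "('f::{comm_ring_1,real_algebra_1} \<Rightarrow> 's::ab_group_add \<Rightarrow> 's)
    \<Rightarrow> ('f \<Rightarrow> 'f) \<Rightarrow> ('s \<Rightarrow> 's) \<Rightarrow> ('s \<Rightarrow> 's \<Rightarrow> 's) \<Rightarrow> ('s \<Rightarrow> 'f \<Rightarrow> 'f)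
    \<Rightarrow> ('s \<Rightarrow> 's \<Rightarrow> 'f) \<Rightarrow> ('s \<Rightarrow> 's \<Rightarrow> 's) \<Rightarrow> bool" where
  "hom_levi_civita sm pb phi br anc ip nabla \<longleftrightarrow>
     (\<forall>X. real_lin_s sm (nabla X)) \<and> (\<forall>Y. real_lin_s sm (\<lambda>X. nabla X Y))
   \<and> (\<forall>f X Y. nabla (sm f X) Y = sm (pb f) (nabla X Y))
   \<and> (\<forall>X f Y. nabla X (sm f Y) = sm (pb f) (nabla X Y) + sm (anc (phi X) f) (phi Y))
   \<and> (\<forall>X Y. br X Y = nabla X Y - nabla Y X)
   \<and> (\<forall>X Y Z. anc (phi X) (ip Y Z) = ip (nabla X Y) (phi Z) + ip (phi Y) (nabla X Z))"

text \<open>Almost para-complex structure. Reading: phi o K is a bundle endomorphism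
  (additive and C^infty-linear), so that its eigen-spaces are subbundles.\<close>
definition almost_para_complex :: "('f::{comm_ring_1,real_algebra_1} \<Rightarrow> 's::ab_group_add \<Rightarrow> 's)
    \<Rightarrow> ('s \<Rightarrow> 's) \<Rightarrow> ('s \<Rightarrow> 's) \<Rightarrow> bool" where
  "almost_para_complex sm phi K \<longleftrightarrow> bij K
   \<and> (\<forall>X. phi (K (phi (K X))) = X)
   \<and> (\<forall>X. phi (K X) = K (phi X))
   \<and> (\<forall>X Y. phi (K (X + Y)) = phi (K X) + phi (K Y))
   \<and> (\<forall>f X. phi (K (sm f X)) = sm f (phi (K X)))"

definition plus_eigen :: "('s \<Rightarrow> 's) \<Rightarrow> ('s \<Rightarrow> 's) \<Rightarrow> 's set" where
  "plus_eigen phi K = {X. phi (K X) = X}"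

definition minus_eigen :: "('s::ab_group_add \<Rightarrow> 's) \<Rightarrow> ('s \<Rightarrow> 's) \<Rightarrow> 's set" where
  "minus_eigen phi K = {X. phi (K X) = - X}"

definition para_kahler :: "('f::{comm_ring_1,real_algebra_1} \<Rightarrow> 's::ab_group_add \<Rightarrow> 's)
    \<Rightarrow> ('f \<Rightarrow> 'f) \<Rightarrow> ('s \<Rightarrow> 's) \<Rightarrow> ('s \<Rightarrow> 's \<Rightarrow> 's) \<Rightarrow> ('s \<Rightarrow> 'f \<Rightarrow> 'f)
    \<Rightarrow> ('s \<Rightarrow> 's) \<Rightarrow> ('s \<Rightarrow> 's \<Rightarrow> 'f) \<Rightarrow> ('s \<Rightarrow> 's \<Rightarrow> 's) \<Rightarrow> bool" where
  "para_kahler sm pb phi br anc K ip nabla \<longleftrightarrow>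
     hom_lie_algebroid sm pb phi br anc
   \<and> pseudo_riemannian sm pb phi ip
   \<and> almost_para_complex sm phi K
   \<and> (\<forall>X Y. ip (phi (K X)) (phi (K Y)) = - ip X Y)
   \<and> hom_levi_civita sm pb phi br anc ip nabla
   \<and> (\<forall>X Y. nabla X (phi (K Y)) = phi (K (nabla X Y)))"

definition Omega :: "('s \<Rightarrow> 's) \<Rightarrow> ('s \<Rightarrow> 's) \<Rightarrow> ('s \<Rightarrow> 's \<Rightarrow> 'f) \<Rightarrow> 's \<Rightarrow> 's \<Rightarrow> 'f" where
  "Omega phi K ip X Y = ip (phi (K X)) Y"

end

theory Submission
  imports Defs
begin

lemma addmap_neg:
  fixes T :: "'a::ab_group_add \<Rightarrow> 'b::ab_group_add"
  assumes "\<And>x y. T (x + y) = T x + T y"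
  shows "T (-x) = - T x" and "T 0 = 0" and "T (x - y) = T x - T y"
proof -
  have "T (0 + 0) = T 0 + T 0" by (rule assms)
  then show z: "T 0 = 0" by simp
  have "T (x + -x) = T x + T (-x)" by (rule assms)
  with z show n: "T (-x) = - T x" by (simp add: add_eq_0_iff2)
  have "T (x + -y) = T x + T (-y)" by (rule assms)
  then show "T (x - y) = T x - T y"
    using assms[of "-y" y] z by (simp add: eq_neg_iff_add_eq_0)
qed

lemma half_zero:
  fixes a :: "'f::real_algebra_1"
  assumes "a = - a" shows "a = 0"
proof -
  have "a + a = 0" using assms by (metis add.right_inverse)
  then have "scaleR 2 a = 0" by (simp add: scaleR_2)
  then show ?thesis by simp
qed

theorem mainTheorem6:
  fixes sm :: "'f::{comm_ring_1,real_algebra_1} \<Rightarrow> 's::ab_group_add \<Rightarrow> 's"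
    and pb :: "'f \<Rightarrow> 'f" and phi :: "'s \<Rightarrow> 's" and br :: "'s \<Rightarrow> 's \<Rightarrow> 's"
    and anc :: "'s \<Rightarrow> 'f \<Rightarrow> 'f" and K :: "'s \<Rightarrow> 's" and ip :: "'s \<Rightarrow> 's \<Rightarrow> 'f"
    and nabla nabla_a :: "'s \<Rightarrow> 's \<Rightarrow> 's"
  assumes "para_kahler sm pb phi br anc K ip nabla"
    and "\<forall>X Y Z. Omega phi K ip (nabla_a X Y) (phi Z)
               = anc (phi X) (Omega phi K ip Y Z) - Omega phi K ip (phi Y) (br X Z)"
  shows "(\<forall>X Y. X \<in> plus_eigen phi K \<longrightarrow> Y \<in> plus_eigen phi K \<longrightarrow> nabla X Y = nabla_a X Y)
       \<and> (\<forall>X Y. X \<in> minus_eigen phi K \<longrightarrow> Y \<in> minus_eigen phi K \<longrightarrow> nabla X Y = nabla_a X Y)"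
proof -
  note pk = assms(1)[unfolded para_kahler_def]
  have HL: "hom_lie_algebroid sm pb phi br anc" using pk by blast
  have PR: "pseudo_riemannian sm pb phi ip" using pk by blast
  have APC: "almost_para_complex sm phi K" using pk by blast
  have LC: "hom_levi_civita sm pb phi br anc ip nabla" using pk by blast
  have Jip: "\<And>X Y. ip (phi (K X)) (phi (K Y)) = - ip X Y" using pk by blast
  have Jn: "\<And>X Y. nabla X (phi (K Y)) = phi (K (nabla X Y))" using pk by blast
  have HB: "hom_bundle sm pb phi" using HL unfolding hom_lie_algebroid_def by blast
  have bphi: "bij phi" using HB unfolding hom_bundle_def by blast
  have phiadd: "\<And>X Y. phi (X + Y) = phi X + phi Y"
    using HB unfolding hom_bundle_def real_lin_s_def by blast
  have ancadd: "\<And>X f g. anc X (f + g) = anc X f + anc X g"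
    using HL unfolding hom_lie_algebroid_def phi_derivation_def by meson
  have ipsym: "\<And>X Y. ip X Y = ip Y X" using PR unfolding pseudo_riemannian_def by blast
  have ipadd: "\<And>X Y Z. ip (X + Y) Z = ip X Z + ip Y Z"
    using PR unfolding pseudo_riemannian_def by blast
  have ipadd2: "\<And>X Y Z. ip Z (X + Y) = ip Z X + ip Z Y" using ipadd ipsym by metis
  have ipnd: "\<And>X. (\<forall>Y. ip X Y = 0) \<Longrightarrow> X = 0" using PR unfolding pseudo_riemannian_def by blast
  have JJ: "\<And>X. phi (K (phi (K X))) = X" using APC unfolding almost_para_complex_def by blast
  have Jc: "\<And>X. phi (K X) = K (phi X)" using APC unfolding almost_para_complex_def by blast
  have Jadd: "\<And>X Y. phi (K (X + Y)) = phi (K X) + phi (K Y)"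
    using APC unfolding almost_para_complex_def by blast
  have nadd: "\<And>X Y Z. nabla X (Y + Z) = nabla X Y + nabla X Z"
    using LC unfolding hom_levi_civita_def real_lin_s_def by blast
  have brn: "\<And>X Y. br X Y = nabla X Y - nabla Y X" using LC unfolding hom_levi_civita_def by blast
  have met: "\<And>X Y Z. anc (phi X) (ip Y Z) = ip (nabla X Y) (phi Z) + ip (phi Y) (nabla X Z)"
    using LC unfolding hom_levi_civita_def by blast
  have A: "\<And>X Y Z. ip (phi (K (nabla_a X Y))) (phi Z)
               = anc (phi X) (ip (phi (K Y)) Z) - ip (phi (K (phi Y))) (br X Z)"
    using assms(2) unfolding Omega_def by blast
  have Jphi: "\<And>Y. phi (K (phi Y)) = phi (phi (K Y))" using Jc by metis
  have key: "nabla X Y = nabla_a X Y"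
    if h: "\<And>Z. ip (phi (K (nabla X Y))) (phi Z) = ip (phi (K (nabla_a X Y))) (phi Z)" for X Y
  proof -
    let ?W = "nabla X Y - nabla_a X Y"
    have "ip (phi (K ?W)) Z' = 0" for Z'
    proof -
      obtain Z where Z: "Z' = phi Z" using bphi by (metis bij_pointE)
      have "phi (K ?W) = phi (K (nabla X Y)) - phi (K (nabla_a X Y))"
        by (rule addmap_neg(3)[of "\<lambda>x. phi (K x)"]) (rule Jadd)
      then show ?thesis using h[of Z] Z addmap_neg(3)[of "\<lambda>x. ip x Z'", OF ipadd] by simp
    qed
    then have "phi (K ?W) = 0" using ipnd by blast
    then have "?W = phi (K 0)" using JJ[of ?W] by simp
    also have "\<dots> = 0" by (rule addmap_neg(2)[of "\<lambda>x. phi (K x)"]) (rule Jadd)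
    finally show ?thesis by simp
  qed
  have P1: "nabla X Y = nabla_a X Y"
    if X: "phi (K X) = X" and Y: "phi (K Y) = Y" for X Y
  proof (rule key)
    fix Z
    have L: "ip (phi (K (nabla X Y))) (phi Z) = ip (nabla X Y) (phi Z)"
      using Jn[of X Y] Y by simp
    have W: "phi (K (nabla Z X)) = nabla Z X" using Jn[of Z X] X by simp
    have PY: "phi (K (phi Y)) = phi Y" using Jphi[of Y] Y by simp
    have "ip (phi Y) (nabla Z X) = - ip (phi Y) (nabla Z X)"
      using Jip[of "phi Y" "nabla Z X"] PY W by simp
    then have z: "ip (phi Y) (nabla Z X) = 0" by (rule half_zero)
    have "ip (phi (K (nabla_a X Y))) (phi Z)
        = ip (nabla X Y) (phi Z) + ip (phi Y) (nabla X Z) - ip (phi Y) (nabla X Z - nabla Z X)"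
      using A[of X Y Z] Y PY met[of X Y Z] brn[of X Z] by simp
    also have "\<dots> = ip (nabla X Y) (phi Z)"
      using addmap_neg(3)[of "ip (phi Y)", OF ipadd2] z by simp
    finally show "ip (phi (K (nabla X Y))) (phi Z) = ip (phi (K (nabla_a X Y))) (phi Z)"
      using L by simp
  qed
  have P2: "nabla X Y = nabla_a X Y"
    if X: "phi (K X) = - X" and Y: "phi (K Y) = - Y" for X Y
  proof (rule key)
    fix Z
    have nneg: "nabla A (-B) = - nabla A B" for A B using addmap_neg(1)[of "nabla A", OF nadd] by blast
    have phineg: "phi (-A) = - phi A" for A using addmap_neg(1)[of phi, OF phiadd] by blast
    have ipneg: "ip (-A) B = - ip A B" for A B using addmap_neg(1)[of "\<lambda>x. ip x B", OF ipadd] by blast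
    have ipneg2: "\<And>A B. ip B (-A) = - ip B A" using ipneg ipsym by metis
    have ancneg: "anc A (-f) = - anc A f" for A f using addmap_neg(1)[of "anc A", OF ancadd] by blast
    have L: "ip (phi (K (nabla X Y))) (phi Z) = - ip (nabla X Y) (phi Z)"
      using Jn[of X Y] Y nneg ipneg by metis
    have W: "phi (K (nabla Z X)) = - nabla Z X" using Jn[of Z X] X nneg by metis
    have PY: "phi (K (phi Y)) = - phi Y" using Jphi[of Y] Y phineg by simp
    have "ip (phi Y) (nabla Z X) = - ip (phi Y) (nabla Z X)"
      using Jip[of "phi Y" "nabla Z X"] PY W ipneg ipneg2 by simp
    then have z: "ip (phi Y) (nabla Z X) = 0" by (rule half_zero)
    have "ip (phi (K (nabla_a X Y))) (phi Z)
        = - (ip (nabla X Y) (phi Z) + ip (phi Y) (nabla X Z)) + ip (phi Y) (nabla X Z - nabla Z X)"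
      using A[of X Y Z] Y PY met[of X Y Z] brn[of X Z] ipneg ancneg by simp
    also have "\<dots> = - ip (nabla X Y) (phi Z)"
      using addmap_neg(3)[of "ip (phi Y)", OF ipadd2] z by simp
    finally show "ip (phi (K (nabla X Y))) (phi Z) = ip (phi (K (nabla_a X Y))) (phi Z)"
      using L by simp
  qed
  show ?thesis unfolding plus_eigen_def minus_eigen_def using P1 P2 by blast
qed

end
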